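(* Fix $t\ge 0$ and let $\sigma\subseteq\mathcal C$ and $\tau\subseteq\mathcal Y^\circ$ be finite, nonempty subsets. Set $A:=\max_{x\in\sigma} r_{\mathcal C}(x)$, $B:=\max_{y\in\tau} r_{\mathcal Y}(y)$. Then $\sigma\cup\tau$ is a simplex of $\mathrm{VR}_t(\mathcal X,d_\theta)$ if and only if: (1) $\sigma$ is a simplex of $\mathrm{VR}_t(\mathcal C,\beta)$; (2) $\tau$ is a simplex of $\mathrm{VR}_t(\mathcal Y^\circ,d_{\mathrm{reg}})$; (3) $\|(A,B)\|_{\ell^p}\le t$.
   Context: Let $A$ be a unital $C^*$-algebra, $H$ a Hilbert space, $\mathcal X=\mathrm{CB}(A,B(H))$, $\mathcal C=\mathrm{CP}(A,B(H))$ with Bures distance $\beta$. Fix $\theta\in\mathcal C$, $\lambda>0$, $\alpha\in(0,1]$, $p\in[1,\infty]$ and let $d_\theta$ be the Bures--Kuratowski metric $\beta^{BK}_{\theta,\lambda,p,\alpha}$ on $\mathcal X$. Let $\mathcal Y=(\mathcal X\setminus\mathcal C)\sqcup\{\ast\}$ with metric $d_{\mathrm{reg}}(x,y)=\lambda\delta_{\mathrm{reg}}(x,y)^\alpha$, $d_{\mathrm{reg}}(x,\ast)=\lambda\delta_{\mathrm{reg}}(x,0)^\alpha$, where $\delta_{\mathrm{reg}}$ is the regular-representation metric, and $\mathcal Y^\circ=\mathcal Y\setminus\{\ast\}\cong\mathcal X\setminus\mathcal C$. Then $d_\theta=\beta$ on $\mathcal C$, $d_\theta=d_{\mathrm{reg}}$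 on $\mathcal Y^\circ$, and $d_\theta(x,y)=\|(r_{\mathcal C}(x),r_{\mathcal Y}(y))\|_{\ell^p}$ for $x\in\mathcal C$, $y\in\mathcal Y$, where $r_{\mathcal C}(x)=\beta(x,\theta)$ and $r_{\mathcal Y}(y)=d_{\mathrm{reg}}(y,\ast)$. For a metric space $(Z,d)$, $\mathrm{VR}_t(Z,d)$ is the simplicial complex on $Z$ whose simplices are finite subsets of diameter $\le t$. *)

theory Defs
  imports "HOL-Analysis.Analysis"
begin

definition metric_on :: "'a set \<Rightarrow> ('a \<Rightarrow> 'a \<Rightarrow> real) \<Rightarrow> bool" where
  "metric_on S d \<longleftrightarrow>
     (\<forall>x\<in>S. \<forall>y\<in>S. 0 \<le> d x y \<and> (d x y = 0 \<longleftrightarrow> x = y) \<and> d x y = d y x) \<and>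
     (\<forall>x\<in>S. \<forall>y\<in>S. \<forall>z\<in>S. d x z \<le> d x y + d y z)"

definition lp_norm2 :: "ereal \<Rightarrow> real \<Rightarrow> real \<Rightarrow> real" where
  "lp_norm2 p a b =
     (if p = \<infinity> then max \<bar>a\<bar> \<bar>b\<bar>
      else (\<bar>a\<bar> powr real_of_ereal p + \<bar>b\<bar> powr real_of_ereal p) powr (1 / real_of_ereal p))"

definition set_diam :: "('a \<Rightarrow> 'a \<Rightarrow> real) \<Rightarrow> 'a set \<Rightarrow> real" where
  "set_diam d S = Max {d x y | x y. x \<in> S \<and> y \<in> S}"

definition vr_simplex :: "'a set \<Rightarrow> ('a \<Rightarrow> 'a \<Rightarrow> real) \<Rightarrow> real \<Rightarrow> 'a set \<Rightarrow> bool" where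
  "vr_simplex Z d t S \<longleftrightarrow> finite S \<and> S \<noteq> {} \<and> S \<subseteq> Z \<and> set_diam d S \<le> t"

definition d_reg :: "real \<Rightarrow> real \<Rightarrow> ('a \<Rightarrow> 'a \<Rightarrow> real) \<Rightarrow> 'a \<Rightarrow> 'a \<Rightarrow> real" where
  "d_reg lam alpha delta x y = lam * (delta x y) powr alpha"

end

theory Submission
  imports Defs
begin

lemma diam_le_iff:
  assumes "finite S" "S \<noteq> {}"
  shows "set_diam d S \<le> t \<longleftrightarrow> (\<forall>x\<in>S. \<forall>y\<in>S. d x y \<le> t)"
proof -
  have eq: "{d x y | x y. x \<in> S \<and> y \<in> S} = (\<lambda>(x,y). d x y) ` (S \<times> S)" by auto
  have "finite ((\<lambda>(x,y). d x y) ` (S \<times> S))" using assms by auto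
  moreover have "(\<lambda>(x,y). d x y) ` (S \<times> S) \<noteq> {}" using assms by auto
  ultimately show ?thesis unfolding set_diam_def eq by (auto simp: Max_le_iff)
qed

lemma lp_mono:
  assumes "1 \<le> p" "0 \<le> a" "a \<le> a'" "0 \<le> b" "b \<le> b'"
  shows "lp_norm2 p a b \<le> lp_norm2 p a' b'"
proof (cases "p = \<infinity>")
  case True then show ?thesis using assms by (auto simp add: lp_norm2_def le_max_iff_disj)
next
  case False
  define q where "q = real_of_ereal p"
  have q: "q \<ge> 1" using assms(1) False unfolding q_def
    by (cases p) auto
  have "a powr q + b powr q \<le> a' powr q + b' powr q"
    using assms q by (intro add_mono powr_mono2) auto
  then have "(a powr q + b powr q) powr (1/q) \<le> (a' powr q + b' powr q) powr (1/q)"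
    using q assms by (intro powr_mono2) auto
  then show ?thesis using False assms unfolding lp_norm2_def q_def by simp
qed

theorem proposition6p3:
  fixes C :: "'x set"
    and beta delta dtheta :: "'x \<Rightarrow> 'x \<Rightarrow> real"
    and theta zero :: 'x
    and lam alpha t :: real
    and p :: ereal
    and sigma tau :: "'x set"
  assumes dtheta_metric: "metric_on UNIV dtheta"
    and beta_metric: "metric_on C beta"
    and delta_metric: "metric_on UNIV delta"
    and theta_in: "theta \<in> C"
    and zero_in: "zero \<in> C"
    and lam_pos: "lam > 0"
    and alpha_pos: "0 < alpha" and alpha_le: "alpha \<le> 1"
    and p_ge: "1 \<le> p"
    and on_C: "\<forall>x\<in>C. \<forall>y\<in>C. dtheta x y = beta x y"
    and on_Y: "\<forall>x\<in>-C. \<forall>y\<in>-C. dtheta x y = d_reg lam alpha delta x y"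
    and cross: "\<forall>x\<in>C. \<forall>y\<in>-C.
                  dtheta x y = lp_norm2 p (beta x theta) (d_reg lam alpha delta y zero)"
    and t_nonneg: "0 \<le> t"
    and sigma: "finite sigma" "sigma \<noteq> {}" "sigma \<subseteq> C"
    and tau: "finite tau" "tau \<noteq> {}" "tau \<subseteq> -C"
  shows "vr_simplex UNIV dtheta t (sigma \<union> tau) \<longleftrightarrow>
           vr_simplex C beta t sigma \<and>
           vr_simplex (-C) (d_reg lam alpha delta) t tau \<and>
           lp_norm2 p (Max ((\<lambda>x. beta x theta) ` sigma))
                      (Max ((\<lambda>y. d_reg lam alpha delta y zero) ` tau)) \<le> t"
proof -
  let ?f = "\<lambda>x. beta x theta" and ?g = "\<lambda>y. d_reg lam alpha delta y zero"
  let ?L = "lp_norm2 p (Max (?f ` sigma)) (Max (?g ` tau))"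
  have sym: "\<And>x y. dtheta x y = dtheta y x" using dtheta_metric unfolding metric_on_def by auto
  have fnn: "\<And>x. x \<in> C \<Longrightarrow> 0 \<le> ?f x" using beta_metric theta_in unfolding metric_on_def by auto
  have gnn: "\<And>y. 0 \<le> ?g y" using lam_pos unfolding d_reg_def by simp
  obtain x0 where x0: "x0 \<in> sigma" "?f x0 = Max (?f ` sigma)"
    using sigma by (metis (no_types, lifting) Max_in finite_imageI image_iff image_is_empty)
  obtain y0 where y0: "y0 \<in> tau" "?g y0 = Max (?g ` tau)"
    using tau by (metis (no_types, lifting) Max_in finite_imageI image_iff image_is_empty)
  have crossle: "dtheta x y \<le> ?L" if "x \<in> sigma" "y \<in> tau" for x y
  proof -
    have "dtheta x y = lp_norm2 p (?f x) (?g y)" using cross that sigma tau by blast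
    also have "\<dots> \<le> ?L"
      using that sigma tau fnn gnn by (intro lp_mono p_ge) auto
    finally show ?thesis .
  qed
  have crossL: "dtheta x0 y0 = ?L"
  proof -
    have "x0 \<in> C" "y0 \<in> -C" using x0 y0 sigma tau by auto
    then have "dtheta x0 y0 = lp_norm2 p (?f x0) (?g y0)" using cross by blast
    then show ?thesis using x0 y0 by simp
  qed
  have "(\<forall>x\<in>sigma \<union> tau. \<forall>y\<in>sigma \<union> tau. dtheta x y \<le> t) \<longleftrightarrow>
        (\<forall>x\<in>sigma. \<forall>y\<in>sigma. beta x y \<le> t) \<and>
        (\<forall>x\<in>tau. \<forall>y\<in>tau. d_reg lam alpha delta x y \<le> t) \<and> ?L \<le> t"
  proof
    assume H: "\<forall>x\<in>sigma \<union> tau. \<forall>y\<in>sigma \<union> tau. dtheta x y \<le> t"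
    show "(\<forall>x\<in>sigma. \<forall>y\<in>sigma. beta x y \<le> t) \<and>
        (\<forall>x\<in>tau. \<forall>y\<in>tau. d_reg lam alpha delta x y \<le> t) \<and> ?L \<le> t"
      using H on_C on_Y sigma tau crossL x0 y0 by (metis ComplD UnCI subsetD)
  next
    assume H: "(\<forall>x\<in>sigma. \<forall>y\<in>sigma. beta x y \<le> t) \<and>
        (\<forall>x\<in>tau. \<forall>y\<in>tau. d_reg lam alpha delta x y \<le> t) \<and> ?L \<le> t"
    show "\<forall>x\<in>sigma \<union> tau. \<forall>y\<in>sigma \<union> tau. dtheta x y \<le> t"
    proof (intro ballI)
      fix x y assume xy: "x \<in> sigma \<union> tau" "y \<in> sigma \<union> tau"
      show "dtheta x y \<le> t"
      proof (cases "x \<in> sigma")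
        case xs: True
        show ?thesis
        proof (cases "y \<in> sigma")
          case True
          then have "dtheta x y = beta x y" using xs on_C sigma by blast
          then show ?thesis using xs True H by simp
        next
          case False then have "y \<in> tau" using xy by auto
          then show ?thesis using crossle[OF xs] H by fastforce
        qed
      next
        case xs: False
        then have xt: "x \<in> tau" using xy by auto
        show ?thesis
        proof (cases "y \<in> sigma")
          case True then show ?thesis using crossle[OF True xt] H sym[of x y] by fastforce
        next
          case False then have "y \<in> tau" using xy by auto
          then have "dtheta x y = d_reg lam alpha delta x y" using xt on_Y tau by blast
          then show ?thesis using xt \<open>y \<in> tau\<close> H by simp
        qed
      qed
    qed
  qed
  then show ?thesis
    unfolding vr_simplex_def using sigma tau
    by (simp add: diam_le_iff)
qed

end
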